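(* Let $L>0$, $\theta_1>0$, $\theta_2>0$, $0\le\epsilon<1$, $\omega\ge0$, $0<v_{\max}<1$, $c(t)=\theta_1(1+\epsilon\cos(\omega t))$, $D(t,x)=\frac{L-x}{c(t)}$, $\Gamma(x,U)=\frac{\theta_2x}{(1+\theta_2x)(1-U)}-\frac{U}{1-U}$ and $f(t,x,U)=-c(t)\Gamma(x,U)$. Suppose one of the conditions (i), (ii), (iii) holds: (i) $0\le\frac{\epsilon\omega}{(1-\epsilon)^2}<\frac{\theta_1\theta_2}{(1+\theta_2L)^2}$; (ii) $\frac{\theta_1\theta_2}{(1+\theta_2L)^2}<\frac{\epsilon\omega}{(1-\epsilon)^2}<\frac{\theta_1}{L}$ and $\theta_2<\frac1L$; (iii) $\frac{\theta_1\theta_2}{(1+\theta_2L)^2}<\frac{\epsilon\omega}{(1-\epsilon)^2}<\frac{4\theta_1\theta_2}{(1+\theta_2L)^2}$ and $\theta_2>\frac1L$. Then $$\frac{\partial D}{\partial t}(t,x)+\frac{\partial D}{\partial x}(t,x)f(t,x,U)<1$$ for all $t\ge0$, all $x\in(0,L)$ and all $U\in[0,v_{\max}]$.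
   Context: This is the feasibility condition (the delay rate $\frac{d}{dt}D(t,x(t))$ is bounded by one) for the screw extruder model $\dot x(t)=f(t,x(t),U(t-D(t,x(t))))$, where $x$ is the length of the fully filled zone of the extruder and $U$ the inlet filling ratio. *)

theory Defs
  imports "HOL-Analysis.Analysis"
begin

definition extr_c :: "real \<Rightarrow> real \<Rightarrow> real \<Rightarrow> real \<Rightarrow> real" where
  "extr_c \<theta>1 \<epsilon> \<omega> t = \<theta>1 * (1 + \<epsilon> * cos (\<omega> * t))"

definition extr_D :: "real \<Rightarrow> real \<Rightarrow> real \<Rightarrow> real \<Rightarrow> real \<Rightarrow> real \<Rightarrow> real" where
  "extr_D L \<theta>1 \<epsilon> \<omega> t x = (L - x) / extr_c \<theta>1 \<epsilon> \<omega> t"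

definition extr_Gamma :: "real \<Rightarrow> real \<Rightarrow> real \<Rightarrow> real" where
  "extr_Gamma \<theta>2 x U = \<theta>2 * x / ((1 + \<theta>2 * x) * (1 - U)) - U / (1 - U)"

definition extr_f :: "real \<Rightarrow> real \<Rightarrow> real \<Rightarrow> real \<Rightarrow> real \<Rightarrow> real \<Rightarrow> real \<Rightarrow> real" where
  "extr_f \<theta>1 \<theta>2 \<epsilon> \<omega> t x U = - extr_c \<theta>1 \<epsilon> \<omega> t * extr_Gamma \<theta>2 x U"

end

theory Submission
  imports Defs
begin

theorem mainTheorem4:
  fixes L \<theta>1 \<theta>2 \<epsilon> \<omega> vmax :: real
  assumes "L > 0" and "\<theta>1 > 0" and "\<theta>2 > 0"
    and "0 \<le> \<epsilon>" and "\<epsilon> < 1" and "\<omega> \<ge> 0"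
    and "0 < vmax" and "vmax < 1"
    and cond: "(0 \<le> \<epsilon> * \<omega> / (1 - \<epsilon>)\<^sup>2 \<and>
                \<epsilon> * \<omega> / (1 - \<epsilon>)\<^sup>2 < \<theta>1 * \<theta>2 / (1 + \<theta>2 * L)\<^sup>2)
           \<or> (\<theta>1 * \<theta>2 / (1 + \<theta>2 * L)\<^sup>2 < \<epsilon> * \<omega> / (1 - \<epsilon>)\<^sup>2 \<and>
                \<epsilon> * \<omega> / (1 - \<epsilon>)\<^sup>2 < \<theta>1 / L \<and> \<theta>2 < 1 / L)
           \<or> (\<theta>1 * \<theta>2 / (1 + \<theta>2 * L)\<^sup>2 < \<epsilon> * \<omega> / (1 - \<epsilon>)\<^sup>2 \<and>
                \<epsilon> * \<omega> / (1 - \<epsilon>)\<^sup>2 < 4 * \<theta>1 * \<theta>2 / (1 + \<theta>2 * L)\<^sup>2 \<and> \<theta>2 > 1 / L)"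
  shows "\<forall>t x U. t \<ge> 0 \<longrightarrow> 0 < x \<longrightarrow> x < L \<longrightarrow> 0 \<le> U \<longrightarrow> U \<le> vmax \<longrightarrow>
           deriv (\<lambda>s. extr_D L \<theta>1 \<epsilon> \<omega> s x) t
           + deriv (\<lambda>y. extr_D L \<theta>1 \<epsilon> \<omega> t y) x * extr_f \<theta>1 \<theta>2 \<epsilon> \<omega> t x U < 1"
proof (intro allI impI)
  fix t x U :: real
  assume t: "t \<ge> 0" and x0: "0 < x" and xL: "x < L" and U0: "0 \<le> U" and Uv: "U \<le> vmax"
  define c where "c = extr_c \<theta>1 \<epsilon> \<omega> t"
  have cosb: "cos (\<omega> * t) \<ge> -1" by simp
  have "\<epsilon> * cos (\<omega> * t) \<ge> - \<epsilon>" using cosb assms(4)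
    by (metis mult_left_mono mult_minus1_right)
  hence c1: "1 + \<epsilon> * cos (\<omega> * t) \<ge> 1 - \<epsilon>" by linarith
  have cpos: "c \<ge> \<theta>1 * (1 - \<epsilon>)" unfolding c_def extr_c_def
    using c1 assms(2) by (simp add: mult_left_mono)
  have cp: "c > 0" using cpos assms(2,5) by (smt (verit) mult_pos_pos)
  have cnz: "1 + \<epsilon> * cos (\<omega> * t) \<noteq> 0" using c1 assms(5) by linarith
  have d1: "((\<lambda>s. extr_D L \<theta>1 \<epsilon> \<omega> s x) has_real_derivative
        (L - x) * (\<theta>1 * \<epsilon> * \<omega> * sin (\<omega> * t)) / c^2) (at t)"
    unfolding extr_D_def extr_c_def c_def
    apply (rule derivative_eq_intros refl)+
    using cnz assms(2) apply simp
    using cnz assms(2) by (simp add: field_simps power2_eq_square)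
  have d2: "((\<lambda>y. extr_D L \<theta>1 \<epsilon> \<omega> t y) has_real_derivative - 1 / c) (at x)"
    using cp unfolding extr_D_def c_def
    by (auto intro!: derivative_eq_intros simp: field_simps)
  have e: "deriv (\<lambda>s. extr_D L \<theta>1 \<epsilon> \<omega> s x) t
           + deriv (\<lambda>y. extr_D L \<theta>1 \<epsilon> \<omega> t y) x * extr_f \<theta>1 \<theta>2 \<epsilon> \<omega> t x U
        = (L - x) * (\<theta>1 * \<epsilon> * \<omega> * sin (\<omega> * t)) / c^2 + extr_Gamma \<theta>2 x U"
    using DERIV_imp_deriv[OF d1] DERIV_imp_deriv[OF d2] cp
    by (simp add: extr_f_def c_def[symmetric])
  have U1: "U < 1" using Uv assms(8) by linarith
  have p: "1 + \<theta>2 * x > 0" using assms(3) x0 by (smt (verit) mult_pos_pos)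
  have g: "1 - extr_Gamma \<theta>2 x U = 1 / ((1 + \<theta>2 * x) * (1 - U))"
  proof -
    have gen: "\<And>P Q a. P \<noteq> 0 \<Longrightarrow> Q \<noteq> 0 \<Longrightarrow> 1 - (a / (P * Q) - U / Q) = (P * Q - a + U * P) / (P * Q)"
      by (simp add: field_simps)
    have "1 - extr_Gamma \<theta>2 x U = ((1 + \<theta>2 * x) * (1 - U) - \<theta>2 * x + U * (1 + \<theta>2 * x)) / ((1 + \<theta>2 * x) * (1 - U))"
      unfolding extr_Gamma_def using U1 p by (intro gen) auto
    also have "(1 + \<theta>2 * x) * (1 - U) - \<theta>2 * x + U * (1 + \<theta>2 * x) = 1" by (simp add: algebra_simps)
    finally show ?thesis .
  qed
  have g2: "1 / ((1 + \<theta>2 * x) * (1 - U)) \<ge> 1 / (1 + \<theta>2 * x)"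
  proof -
    have "(1 + \<theta>2 * x) * (1 - U) \<le> (1 + \<theta>2 * x)" using p U0 by (simp add: mult_left_le)
    moreover have "(1 + \<theta>2 * x) * (1 - U) > 0" using p U1 by simp
    ultimately show ?thesis by (simp add: frac_le)
  qed
  define K where "K = \<epsilon> * \<omega> / (1 - \<epsilon>)\<^sup>2"
  have K0: "K \<ge> 0" unfolding K_def using assms(4,6) by simp
  have ew: "\<epsilon> * \<omega> \<ge> 0" using assms(4,6) by simp
  have c2: "c^2 \<ge> \<theta>1^2 * (1 - \<epsilon>)^2"
  proof -
    have "0 \<le> \<theta>1 * (1 - \<epsilon>)" using assms(2,5) by simp
    hence "(\<theta>1 * (1 - \<epsilon>))^2 \<le> c^2" using cpos by (intro power_mono) auto
    thus ?thesis by (simp add: power_mult_distrib)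
  qed
  have pos2: "\<theta>1^2 * (1 - \<epsilon>)^2 > 0" using assms(2,5) by simp
  have b1: "(L - x) * (\<theta>1 * \<epsilon> * \<omega> * sin (\<omega> * t)) / c^2 \<le> (L - x) * K / \<theta>1"
  proof -
    have "(L - x) * (\<theta>1 * \<epsilon> * \<omega> * sin (\<omega> * t)) \<le> (L - x) * (\<theta>1 * \<epsilon> * \<omega>)"
    proof -
      have "(\<theta>1 * (\<epsilon> * \<omega>)) * sin (\<omega> * t) \<le> (\<theta>1 * (\<epsilon> * \<omega>)) * 1"
        using ew assms(2) by (intro mult_left_mono) auto
      thus ?thesis using xL by (intro mult_left_mono) (auto simp: mult.assoc)
    qed
    hence "(L - x) * (\<theta>1 * \<epsilon> * \<omega> * sin (\<omega> * t)) / c^2 \<le> (L - x) * (\<theta>1 * \<epsilon> * \<omega>) / c^2"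
      using cp by (simp add: divide_right_mono)
    also have "\<dots> \<le> (L - x) * (\<theta>1 * \<epsilon> * \<omega>) / (\<theta>1^2 * (1 - \<epsilon>)^2)"
    proof (rule divide_left_mono)
      show "0 \<le> (L - x) * (\<theta>1 * \<epsilon> * \<omega>)" using xL ew assms(2)
        by (metis diff_gt_0_iff_gt less_eq_real_def mult.assoc mult_nonneg_nonneg)
      show "0 < c\<^sup>2 * (\<theta>1\<^sup>2 * (1 - \<epsilon>)\<^sup>2)" using cp pos2 by simp
    qed (use c2 in auto)
    also have "\<dots> = (L - x) * K / \<theta>1" proof -
      have ne: "(1 - \<epsilon>)^2 \<noteq> 0" "\<theta>1 \<noteq> 0" using assms(2,5) by auto
      show ?thesis unfolding K_def using ne by (simp add: power2_eq_square)
    qed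
    finally show ?thesis .
  qed
  have amgm: "\<theta>2 * ((L - x) * (1 + \<theta>2 * x)) \<le> (1 + \<theta>2 * L)^2 / 4"
  proof -
    have "0 \<le> (\<theta>2 * (L - x) - (1 + \<theta>2 * x))^2" by simp
    thus ?thesis by (simp add: power2_eq_square algebra_simps)
  qed
  have key: "K * ((L - x) * (1 + \<theta>2 * x)) < \<theta>1"
  proof -
    have gp: "(L - x) * (1 + \<theta>2 * x) > 0" using xL p by simp
    have sq: "(1 + \<theta>2 * L)^2 > 0" using assms(1,3) by (smt (verit) mult_pos_pos zero_less_power)
    have A: "K < 4 * \<theta>1 * \<theta>2 / (1 + \<theta>2 * L)^2 \<Longrightarrow> ?thesis"
    proof -
      assume h: "K < 4 * \<theta>1 * \<theta>2 / (1 + \<theta>2 * L)^2"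
      have "K * ((L - x) * (1 + \<theta>2 * x)) < 4 * \<theta>1 * \<theta>2 / (1 + \<theta>2 * L)^2 * ((L - x) * (1 + \<theta>2 * x))"
        using h gp by (rule mult_strict_right_mono)
      also have "\<dots> = 4 * \<theta>1 / (1 + \<theta>2 * L)^2 * (\<theta>2 * ((L - x) * (1 + \<theta>2 * x)))" by simp
      also have "\<dots> \<le> 4 * \<theta>1 / (1 + \<theta>2 * L)^2 * ((1 + \<theta>2 * L)^2 / 4)"
        using amgm assms(2) sq by (intro mult_left_mono) auto
      also have "\<dots> = \<theta>1" using sq by simp
      finally show ?thesis .
    qed
    have B: "K < \<theta>1 / L \<Longrightarrow> \<theta>2 < 1 / L \<Longrightarrow> ?thesis"
    proof -
      assume h: "K < \<theta>1 / L" and h2: "\<theta>2 < 1 / L"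
      have "\<theta>2 * L < 1" using h2 assms(1) by (simp add: field_simps)
      hence "\<theta>2 * x * (L - x) \<le> x" using x0 xL assms(3)
        by (smt (verit, ccfv_SIG) mult_le_cancel_left1 mult_less_cancel_left mult.commute mult.assoc)
      hence le: "(L - x) * (1 + \<theta>2 * x) \<le> L" by (simp add: algebra_simps)
      have "K * ((L - x) * (1 + \<theta>2 * x)) \<le> K * L" using le K0 by (simp add: mult_left_mono)
      also have "\<dots> < \<theta>1" using h assms(1) by (simp add: field_simps)
      finally show ?thesis .
    qed
    have "4 * \<theta>1 * \<theta>2 / (1 + \<theta>2 * L)^2 \<ge> \<theta>1 * \<theta>2 / (1 + \<theta>2 * L)^2"
      using assms(2,3) sq by (simp add: divide_right_mono)
    thus ?thesis using cond A B unfolding K_def by linarith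
  qed
  have "(L - x) * K / \<theta>1 < 1 / (1 + \<theta>2 * x)"
    using key assms(2) p by (simp add: field_simps)
  thus "deriv (\<lambda>s. extr_D L \<theta>1 \<epsilon> \<omega> s x) t
           + deriv (\<lambda>y. extr_D L \<theta>1 \<epsilon> \<omega> t y) x * extr_f \<theta>1 \<theta>2 \<epsilon> \<omega> t x U < 1"
    using e b1 g g2 by linarith
qed

end
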